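(* Let $p$ be an odd prime, let $F_{X_2}$ be the fusion matrix of the simple object $X_2$ of $\operatorname{PSU}(2)_{p-2}$ (with respect to the ordered basis $X_0,X_2,\dots,X_{p-3}$), and let $T_{X_2}$ be the linear operator on $\frac{p-1}{2}\times\frac{p-1}{2}$ real matrices given by $T_{X_2}(A)=F_{X_2}^{-1}AF_{X_2}$. Then $T_{X_2}$ has no eigenvector with eigenvalue $-1$.
   Context: $\operatorname{PSU}(2)_{p-2}$ is the fusion category with simple objects $X_{2j}$, $0\le j\le\frac{p-3}{2}$, $X_0=\mathbf 1$, and fusion rules $X_{2i}\otimes X_{2j}\cong\bigoplus_m N_{2i,2j}^{2m}X_{2m}$ with $N_{2i,2j}^{2m}=1$ if $|2i-2j|\le2m\le\min\{2i+2j,2(p-2)-2i-2j\}$ and $0$ otherwise. The fusion matrix $F_{X_2}$ has $(m,i)$ entry $N_{2,2i}^{2m}$ (multiplicity of $X_{2m}$ in $X_2\otimes X_{2i}$); it is the symmetric tridiagonal matrix with $0$ in position $(1,1)$, $1$ on the rest of the diagonal, and $1$ on the sub- and super-diagonals, and it is invertible. *)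

theory Defs
  imports "Jordan_Normal_Form.Matrix" "HOL-Computational_Algebra.Primes"
begin

text \<open>Fusion coefficients of PSU(2)_{p-2}: psu_N p i j m is the multiplicity
  N_{2i,2j}^{2m} of X_{2m} in X_{2i} (x) X_{2j}; indices i,j,m range over 0..(p-3)/2.
  N = 1 iff |2i-2j| <= 2m <= min(2i+2j, 2(p-2)-2i-2j).\<close>
definition psu_N :: "nat \<Rightarrow> nat \<Rightarrow> nat \<Rightarrow> nat \<Rightarrow> nat" where
  "psu_N p i j m =
     (if \<bar>2 * int i - 2 * int j\<bar> \<le> 2 * int m \<and>
         2 * int m \<le> min (2 * int i + 2 * int j) (2 * (int p - 2) - 2 * int i - 2 * int j)
      then 1 else 0)"

definition psu_rank :: "nat \<Rightarrow> nat" where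
  "psu_rank p = (p - 1) div 2"

definition fusion_matrix_X2 :: "nat \<Rightarrow> real mat" where
  "fusion_matrix_X2 p = mat (psu_rank p) (psu_rank p) (\<lambda>(m, i). real (psu_N p 1 i m))"

definition sq_mat_inv :: "real mat \<Rightarrow> real mat" where
  "sq_mat_inv F = (THE B. B \<in> carrier_mat (dim_row F) (dim_row F) \<and> inverts_mat F B \<and> inverts_mat B F)"

definition T_X2 :: "nat \<Rightarrow> real mat \<Rightarrow> real mat" where
  "T_X2 p A = sq_mat_inv (fusion_matrix_X2 p) * A * fusion_matrix_X2 p"

end

theory Submission
  imports Defs "Jordan_Normal_Form.Determinant" "HOL-Computational_Algebra.Polynomial"
begin


definition act :: "int poly \<Rightarrow> (int \<Rightarrow> int) \<Rightarrow> int \<Rightarrow> int" where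
  "act P g k = (\<Sum>i\<le>degree P. coeff P i * g (k + int i))"

lemma act_bound: "degree P \<le> N \<Longrightarrow> act P g k = (\<Sum>i\<le>N. coeff P i * g (k + int i))"
  unfolding act_def
  by (rule sum.mono_neutral_left) (auto simp: coeff_eq_0)

lemma act_add: "act (P + Q) g k = act P g k + act Q g k"
proof -
  let ?N = "max (degree P) (degree Q)"
  have "degree (P + Q) \<le> ?N" by (rule degree_add_le) auto
  then show ?thesis
    by (simp add: act_bound[of _ ?N] sum.distrib algebra_simps)
qed

lemma act_smult: "act (smult c P) g k = c * act P g k"
  unfolding act_def by (simp add: sum_distrib_left algebra_simps)

lemma act_zero[simp]: "act 0 g k = 0" unfolding act_def by simp

lemma act_pCons: "act (pCons a P) g k = a * g k + act P g (k + 1)"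
proof -
  have "act (pCons a P) g k = (\<Sum>i\<le>Suc (degree P). coeff (pCons a P) i * g (k + int i))"
    by (rule act_bound) (simp add: degree_pCons_le)
  also have "\<dots> = a * g k + (\<Sum>i\<le>degree P. coeff P i * g (k + 1 + int i))"
    by (subst sum.atMost_Suc_shift) (simp add: algebra_simps)
  finally show ?thesis by (simp add: act_def)
qed

lemma act_mult: "act (P * Q) g k = act P (act Q g) k"
proof (induction P arbitrary: k rule: pCons_induct)
  case 0
  then show ?case by simp
next
  case (pCons a P)
  show ?case
    by (simp add: mult_pCons_left act_add act_smult act_pCons pCons.IH)
qed

lemma act_monom: "act (monom c j) g k = c * g (k + int j)"
proof -
  have "act (monom c j) g k = (\<Sum>i\<le>j. coeff (monom c j) i * g (k + int i))"
    by (rule act_bound) (simp add: degree_monom_le)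
  also have "\<dots> = c * g (k + int j)"
    by (subst sum.remove[of _ j]) (auto simp: coeff_monom)
  finally show ?thesis .
qed

lemma act_of_nat: "act (of_nat c * R) g k = int c * act R g k"
  by (simp add: of_nat_poly act_smult)

lemma frob:
  fixes a b :: "'a :: comm_ring_1"
  assumes "prime p"
  shows "\<exists>R. (a + b) ^ p = a ^ p + b ^ p + of_nat p * R"
proof -
  have p0: "p > 0" using assms prime_gt_0_nat by blast
  have "(a + b) ^ p = (\<Sum>k\<le>p. of_nat (p choose k) * a ^ k * b ^ (p - k))"
    by (rule binomial_ring)
  also have "\<dots> = (\<Sum>k\<in>{0<..<p}. of_nat (p choose k) * a ^ k * b ^ (p - k)) + a ^ p + b ^ p"
  proof -
    have "{..p} = insert 0 (insert p {0<..<p})" using p0 by auto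
    then show ?thesis using p0 by (simp add: algebra_simps)
  qed
  also have "(\<Sum>k\<in>{0<..<p}. of_nat (p choose k) * a ^ k * b ^ (p - k)) =
      of_nat p * (\<Sum>k\<in>{0<..<p}. of_nat ((p choose k) div p) * a ^ k * b ^ (p - k))"
    unfolding sum_distrib_left
  proof (rule sum.cong)
    fix k assume "k \<in> {0<..<p}"
    then have "p dvd (p choose k)" using dvd_choose_prime[of k p] assms p0 by auto
    then have "p choose k = p * ((p choose k) div p)" by simp
    then have "(of_nat (p choose k) :: 'a) = of_nat p * of_nat ((p choose k) div p)"
      by (metis of_nat_mult)
    then show "of_nat (p choose k) * a ^ k * b ^ (p - k) =
      of_nat p * (of_nat ((p choose k) div p) * a ^ k * b ^ (p - k))" by (simp add: algebra_simps)
  qed simp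
  finally show ?thesis
    by (auto simp: algebra_simps intro!: exI[where x = "(\<Sum>k\<in>{0<..<p}. of_nat ((p choose k) div p) * a ^ k * b ^ (p - k))"])
qed



definition per :: "nat \<Rightarrow> (int \<Rightarrow> int) \<Rightarrow> bool" where
  "per p g \<longleftrightarrow> (\<forall>k. g (k + 2 * int p) = g k)"

definition oddf :: "(int \<Rightarrow> int) \<Rightarrow> bool" where
  "oddf g \<longleftrightarrow> (\<forall>k. g (- k) = - g k)"

lemma per_mult: "per p g \<Longrightarrow> g (k + 2 * int p * int t) = g k"
proof (induction t)
  case 0 then show ?case by simp
next
  case (Suc t)
  have "g (k + 2 * int p * int (Suc t)) = g ((k + 2 * int p * int t) + 2 * int p)"
    by (simp add: algebra_simps)
  also have "\<dots> = g (k + 2 * int p * int t)" using Suc.prems unfolding per_def by blast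
  finally show ?case using Suc by simp
qed

lemma per_minus: "per p g \<Longrightarrow> g (k - 2 * int p) = g k"
  unfolding per_def by (metis diff_add_cancel)

lemma per_act: "per p g \<Longrightarrow> per p (act Q g)"
  unfolding per_def act_def
proof (intro allI sum.cong refl)
  fix k x assume "\<forall>k. g (k + 2 * int p) = g k"
  then show "coeff Q x * g (k + 2 * int p + int x) = coeff Q x * g (k + int x)"
    by (metis add.commute add.left_commute)
qed

definition PP :: "nat \<Rightarrow> int poly" where
  "PP p = monom 1 (2*p - 2) + monom 1 (2*p) + monom 1 (2*p+2)"

lemma act_PP: assumes "per p g" "p \<ge> 1"
  shows "act (PP p) g k = g (k - 2) + g k + g (k + 2)"
proof -
  have "act (PP p) g k = g (k + int (2*p-2)) + g (k + 2 * int p) + g (k + 2 * int p + 2)"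
    unfolding PP_def by (simp add: act_add act_monom algebra_simps)
  also have "int (2*p-2) = (k - 2 + 2 * int p) - k" using assms(2) by simp
  finally show ?thesis using assms(1) unfolding per_def
    by (metis add.commute add.left_commute diff_add_cancel)
qed

lemma oddf_act_PP: assumes "per p g" "oddf g" "p \<ge> 1"
  shows "oddf (act (PP p) g)"
  using assms unfolding oddf_def
  by (auto simp: act_PP) (metis minus_diff_eq uminus_add_conv_diff add.commute diff_minus_eq_add)

lemma PP_pow: assumes "prime p"
  shows "\<exists>R. (PP p) ^ p = monom 1 ((2*p-2)*p) + monom 1 (2*p*p) + monom 1 ((2*p+2)*p) + of_nat p * R"
proof -
  obtain R1 where R1: "(monom 1 (2*p - 2) + monom 1 (2*p) + monom (1::int) (2*p+2)) ^ p =
     (monom 1 (2*p - 2) + monom 1 (2*p)) ^ p + monom 1 (2*p+2) ^ p + of_nat p * R1"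
    using frob[OF assms] by blast
  obtain R2 where R2: "(monom 1 (2*p - 2) + monom (1::int) (2*p)) ^ p =
     monom 1 (2*p - 2) ^ p + monom 1 (2*p) ^ p + of_nat p * R2"
    using frob[OF assms] by blast
  show ?thesis unfolding PP_def R1 R2 monom_power
    by (auto simp: algebra_simps intro!: exI[where x = "R1 + R2"])
qed

lemma act_PP_pow: assumes "prime p" "per p g"
  shows "\<exists>R. \<forall>k. act (PP p ^ p) g k = 3 * g k + int p * act R g k"
proof -
  obtain R where R: "(PP p) ^ p = monom 1 ((2*p-2)*p) + monom 1 (2*p*p) + monom 1 ((2*p+2)*p) + of_nat p * R"
    using PP_pow[OF assms(1)] by blast
  have p1: "p \<ge> 1" using assms(1) prime_gt_0_nat by (simp add: Suc_le_eq)
  have e1: "int ((2*p-2)*p) = 2 * int p * int (p - 1)" using p1 by (simp add: algebra_simps of_nat_diff)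
  have e2: "int (2*p*p) = 2 * int p * int p" by simp
  have e3: "int ((2*p+2)*p) = 2 * int p * int (p + 1)" by (simp add: algebra_simps)
  have "act (PP p ^ p) g k = 3 * g k + int p * act R g k" for k
    unfolding R act_add act_monom act_of_nat e1 e2 e3 per_mult[OF assms(2)] by simp
  then show ?thesis by blast
qed



definition Fi :: "nat \<Rightarrow> int mat" where
  "Fi p = mat (psu_rank p) (psu_rank p) (\<lambda>(m, i). (if i + 1 = m then 1 else 0) + (if i = m + 1 then 1 else 0)
       + (if i = m \<and> m \<noteq> 0 then 1 else 0))"

definition restr :: "nat \<Rightarrow> (int \<Rightarrow> int) \<Rightarrow> int vec" where
  "restr n g = vec n (\<lambda>m. g (2 * int m + 1))"

lemma per_odd_p: assumes "per p g" "oddf g" shows "g (int p) = 0"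
proof -
  have "g (int p) = g (- int p + 2 * int p)" by simp
  also have "\<dots> = g (- int p)" using assms(1) unfolding per_def by blast
  also have "\<dots> = - g (int p)" using assms(2) unfolding oddf_def by blast
  finally show ?thesis by simp
qed

lemma sum_delta_pred: "(\<Sum>i\<in>{0..<n::nat}. (if Suc i = (m::nat) then f i else 0)) = (if m \<ge> 1 \<and> m - 1 < n then f (m - 1) else (0::int))"
  by (cases m) (auto simp: sum.delta)

lemma Fi_restr: assumes "odd p" "per p g" "oddf g"
  shows "Fi p *\<^sub>v restr (psu_rank p) g = restr (psu_rank p) (act (PP p) g)"
proof (rule eq_vecI)
  let ?n = "psu_rank p"
  have p1: "p \<ge> 1" using assms(1) by (cases p) auto
  have pn: "int p = 2 * int ?n + 1" using assms(1) unfolding psu_rank_def by (auto elim!: oddE)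
  have gp: "g (int p) = 0" using per_odd_p assms(2,3) by blast
  show "dim_vec (Fi p *\<^sub>v restr ?n g) = dim_vec (restr ?n (act (PP p) g))"
    by (simp add: Fi_def restr_def)
  fix m assume "m < dim_vec (restr ?n (act (PP p) g))"
  then have m: "m < ?n" by (simp add: restr_def)
  have "(Fi p *\<^sub>v restr ?n g) $ m = (\<Sum>i\<in>{0..<?n}. ((if i + 1 = m then 1 else 0) + (if i = m + 1 then 1 else 0)
       + (if i = m \<and> m \<noteq> 0 then 1 else 0)) * g (2 * int i + 1))"
    using m by (simp add: Fi_def restr_def scalar_prod_def)
  also have "\<dots> = (\<Sum>i\<in>{0..<?n}. (if i + 1 = m then g (2 * int i + 1) else 0)) +
       (\<Sum>i\<in>{0..<?n}. (if i = m + 1 then g (2 * int i + 1) else 0)) +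
       (\<Sum>i\<in>{0..<?n}. (if i = m \<and> m \<noteq> 0 then g (2 * int i + 1) else 0))"
    unfolding sum.distrib[symmetric] by (rule sum.cong) auto
  also have "\<dots> = (if m \<ge> 1 then g (2 * int m - 1) else 0) + (if m + 1 < ?n then g (2 * int m + 3) else 0)
      + (if m \<noteq> 0 then g (2 * int m + 1) else 0)"
  proof -
    have 1: "(\<Sum>i\<in>{0..<?n}. (if i + 1 = m then g (2 * int i + 1) else 0)) = (if m \<ge> 1 then g (2 * int m - 1) else 0)"
      using m by (auto simp: sum_delta_pred of_nat_diff algebra_simps)
    have 2: "(\<Sum>i\<in>{0..<?n}. (if i = m + 1 then g (2 * int i + 1) else 0)) = (if m + 1 < ?n then g (2 * int m + 3) else 0)"
      by (simp add: sum.delta algebra_simps)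
    have 3: "(\<Sum>i\<in>{0..<?n}. (if i = m \<and> m \<noteq> 0 then g (2 * int i + 1) else 0)) = (if m \<noteq> 0 then g (2 * int m + 1) else 0)"
      using m by (cases "m = 0") (simp_all add: sum.delta)
    show ?thesis unfolding 1 2 3 ..
  qed
  also have "\<dots> = g (2 * int m - 1) + g (2 * int m + 1) + g (2 * int m + 3)"
  proof -
    have A: "(if m + 1 < ?n then g (2 * int m + 3) else 0) = g (2 * int m + 3)"
    proof (cases "m + 1 < ?n")
      case False
      then have "m + 1 = ?n" using m by simp
      then have "2 * int m + 3 = int p" using pn by simp
      then show ?thesis using gp False by simp
    qed simp
    have B: "(if m \<ge> 1 then g (2 * int m - 1) else 0) + (if m \<noteq> 0 then g (2 * int m + 1) else 0)
        = g (2 * int m - 1) + g (2 * int m + 1)"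
    proof (cases "m = 0")
      case True
      have "g (-1) = - g 1" using assms(3) unfolding oddf_def by (metis)
      then show ?thesis using True by simp
    qed auto
    show ?thesis using A B by simp
  qed
  also have "\<dots> = (restr ?n (act (PP p) g)) $ m"
    using m by (simp add: restr_def act_PP[OF assms(2) p1] algebra_simps)
  finally show "(Fi p *\<^sub>v restr ?n g) $ m = (restr ?n (act (PP p) g)) $ m" .
qed

lemma Fi_carrier[simp]: "Fi p \<in> carrier_mat (psu_rank p) (psu_rank p)"
  by (simp add: Fi_def)

lemma restr_carrier[simp]: "restr n g \<in> carrier_vec n"
  by (simp add: restr_def)

lemma Fi_pow: assumes "odd p" "per p g" "oddf g"
  shows "(Fi p ^\<^sub>m j) *\<^sub>v restr (psu_rank p) g = restr (psu_rank p) (act (PP p ^ j) g)"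
  using assms(2,3)
proof (induction j arbitrary: g)
  case 0
  have "act 1 g = g" by (rule ext) (simp add: act_def)
  then show ?case by (simp add: Fi_def)
next
  case (Suc j)
  have p1: "p \<ge> 1" using assms(1) by (cases p) auto
  have c: "Fi p ^\<^sub>m j \<in> carrier_mat (psu_rank p) (psu_rank p)" by simp
  have "(Fi p ^\<^sub>m Suc j) *\<^sub>v restr (psu_rank p) g = (Fi p ^\<^sub>m j) *\<^sub>v (Fi p *\<^sub>v restr (psu_rank p) g)"
    using assoc_mult_mat_vec[OF c Fi_carrier restr_carrier] by simp
  also have "\<dots> = (Fi p ^\<^sub>m j) *\<^sub>v restr (psu_rank p) (act (PP p) g)"
    using Fi_restr[OF assms(1) Suc.prems] by simp
  also have "\<dots> = restr (psu_rank p) (act (PP p ^ j) (act (PP p) g))"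
    by (rule Suc.IH) (use Suc.prems per_act oddf_act_PP p1 in auto)
  also have "act (PP p ^ j) (act (PP p) g) = act (PP p ^ Suc j) g"
    by (rule ext) (simp only: power_Suc2 act_mult)
  finally show ?case .
qed

definition extv :: "nat \<Rightarrow> int vec \<Rightarrow> int \<Rightarrow> int" where
  "extv p v k = (let r = k mod (2 * int p) in
     if odd r \<and> r < int p then v $ nat ((r - 1) div 2)
     else if odd r \<and> int p < r then - (v $ nat ((2 * int p - r - 1) div 2)) else 0)"

lemma per_extv: "per p (extv p v)"
  unfolding per_def extv_def by simp

lemma oddf_extv: assumes "p \<ge> 1" shows "oddf (extv p v)"
  unfolding oddf_def
proof
  fix k
  let ?q = "2 * int p"
  have q: "?q > 0" using assms by simp
  define r where "r = k mod ?q"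
  have r: "0 \<le> r" "r < ?q" using q unfolding r_def by auto
  show "extv p v (- k) = - extv p v k"
  proof (cases "r = 0")
    case True
    then have "(- k) mod ?q = 0" unfolding r_def by (simp add: zmod_zminus1_eq_if)
    then show ?thesis using True unfolding extv_def r_def[symmetric] by simp
  next
    case False
    then have rr: "(- k) mod ?q = ?q - r" unfolding r_def by (simp add: zmod_zminus1_eq_if)
    have o: "odd (?q - r) \<longleftrightarrow> odd r" by simp
    show ?thesis unfolding extv_def Let_def rr r_def[symmetric] using r
      by (auto simp: o)
  qed
qed

lemma restr_extv: assumes "odd p" "v \<in> carrier_vec (psu_rank p)"
  shows "restr (psu_rank p) (extv p v) = v"
proof (rule eq_vecI)
  have pn: "int p = 2 * int (psu_rank p) + 1" using assms(1) unfolding psu_rank_def by (auto elim!: oddE)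
  show "dim_vec (restr (psu_rank p) (extv p v)) = dim_vec v" using assms(2) by (simp add: restr_def)
  fix m assume "m < dim_vec v"
  then have m: "m < psu_rank p" using assms(2) by simp
  have "(2 * int m + 1) mod (2 * int p) = 2 * int m + 1" using m pn by simp
  moreover have "nat ((2 * int m + 1 - 1) div 2) = m" by simp
  ultimately show "restr (psu_rank p) (extv p v) $ m = v $ m"
    using m pn by (simp add: restr_def extv_def Let_def)
qed

lemma Fi_pow_cong: assumes "prime p" "odd p" "a < psu_rank p" "b < psu_rank p"
  shows "int p dvd ((Fi p ^\<^sub>m p) $$ (a, b) - (if a = b then 3 else 0))"
proof -
  let ?n = "psu_rank p"
  let ?v = "unit_vec ?n b :: int vec"
  let ?g = "extv p ?v"
  have p1: "p \<ge> 1" using assms(2) by (cases p) auto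
  obtain R where R: "\<forall>k. act (PP p ^ p) ?g k = 3 * ?g k + int p * act R ?g k"
    using act_PP_pow[OF assms(1) per_extv] by blast
  have c: "Fi p ^\<^sub>m p \<in> carrier_mat ?n ?n" by simp
  have d: "dim_row (Fi p ^\<^sub>m p) = ?n" "dim_col (Fi p ^\<^sub>m p) = ?n" using carrier_matD[OF c] by auto
  have "(Fi p ^\<^sub>m p) $$ (a, b) = ((Fi p ^\<^sub>m p) *\<^sub>v ?v) $ a"
    using d assms(3,4) by (simp add: scalar_prod_right_unit[OF assms(4)])
  also have "\<dots> = ((Fi p ^\<^sub>m p) *\<^sub>v restr ?n ?g) $ a"
    using restr_extv[OF assms(2), of ?v] by simp
  also have "\<dots> = restr ?n (act (PP p ^ p) ?g) $ a"
    using Fi_pow[OF assms(2) per_extv oddf_extv[OF p1]] by simp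
  also have "\<dots> = 3 * restr ?n ?g $ a + int p * act R ?g (2 * int a + 1)"
    using assms(3) R by (simp add: restr_def)
  also have "restr ?n ?g $ a = ?v $ a"
    using restr_extv[OF assms(2), of ?v] by simp
  finally show ?thesis using assms(3,4) by simp
qed



lemma prod_dvd_diff:
  fixes f g :: "nat \<Rightarrow> int"
  assumes "finite A" "\<forall>i\<in>A. q dvd (f i - g i)"
  shows "q dvd (prod f A - prod g A)"
  using assms
proof (induction A rule: finite_induct)
  case empty then show ?case by simp
next
  case (insert a A)
  have "prod f (insert a A) - prod g (insert a A) = f a * (prod f A - prod g A) + (f a - g a) * prod g A"
    using insert by (simp add: algebra_simps)
  then show ?case using insert by simp
qed

lemma det_cong:
  fixes M :: "int mat"
  assumes M: "M \<in> carrier_mat N N"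
    and cong: "\<forall>a<N. \<forall>b<N. q dvd (M $$ (a, b) - (if a = b then d else 0))"
  shows "q dvd (det M - d ^ N)"
proof -
  let ?P = "{s. s permutes {0..<N}}"
  have fin: "finite ?P" by (simp add: finite_permutations)
  have "det M = (\<Sum>s\<in>?P. signof s * (\<Prod>i = 0..<N. M $$ (i, s i)))"
    by (rule det_def'[OF M])
  moreover have "d ^ N = (\<Sum>s\<in>?P. (if s = id then d ^ N else 0))"
    using fin by (simp add: sum.delta' permutes_id)
  ultimately have e: "det M - d ^ N = (\<Sum>s\<in>?P. signof s * (\<Prod>i = 0..<N. M $$ (i, s i)) - (if s = id then d ^ N else 0))"
    by (simp add: sum_subtractf)
  show ?thesis unfolding e
  proof (rule dvd_sum)
    fix s assume s: "s \<in> ?P"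
    show "q dvd signof s * (\<Prod>i = 0..<N. M $$ (i, s i)) - (if s = id then d ^ N else 0)"
    proof (cases "s = id")
      case True
      have "q dvd ((\<Prod>i = 0..<N. M $$ (i, s i)) - (\<Prod>i = 0..<N. d))"
        by (rule prod_dvd_diff) (use cong True in fastforce)+
      then show ?thesis using True by (simp add: sign_id)
    next
      case False
      then obtain i where i: "s i \<noteq> i" by (metis eq_id_iff)
      have sp: "s permutes {0..<N}" using s by simp
      have iN: "i < N" using i permutes_not_in[OF sp] by fastforce
      have siN: "s i < N" using permutes_in_image[OF sp] iN by simp
      have "q dvd M $$ (i, s i)" using cong iN siN i by fastforce
      then have "q dvd (\<Prod>i = 0..<N. M $$ (i, s i))"
        using iN by (meson atLeastLessThan_iff dvd_prodI dvd_trans finite_atLeastLessThan zero_le)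
      then show ?thesis using False by simp
    qed
  qed
qed

lemma det_nonzero_cong:
  fixes M :: "int mat"
  assumes M: "M \<in> carrier_mat N N" and p: "prime p" and nd: "\<not> int p dvd d"
    and cong: "\<forall>a<N. \<forall>b<N. int p dvd (M $$ (a, b) - (if a = b then d else 0))"
  shows "det M \<noteq> 0"
proof
  assume "det M = 0"
  then have "int p dvd d ^ N" using det_cong[OF M cong] by simp
  then have "int p dvd d" using prime_dvd_power[of "int p" d N] p by simp
  then show False using nd by simp
qed

lemma real_inj_cong:
  fixes M :: "int mat" and v :: "real vec"
  assumes M: "M \<in> carrier_mat N N" and p: "prime p" and nd: "\<not> int p dvd d"
    and cong: "\<forall>a<N. \<forall>b<N. int p dvd (M $$ (a, b) - (if a = b then d else 0))"
    and v: "v \<in> carrier_vec N" and mv: "map_mat real_of_int M *\<^sub>v v = 0\<^sub>v N"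
  shows "v = 0\<^sub>v N"
proof (rule ccontr)
  assume "v \<noteq> 0\<^sub>v N"
  have Mr: "map_mat real_of_int M \<in> carrier_mat N N" using M by simp
  have "det (map_mat real_of_int M) = 0"
    unfolding det_0_iff_vec_prod_zero[OF Mr] using v mv \<open>v \<noteq> 0\<^sub>v N\<close> by blast
  then have "det M = 0" by simp
  then show False using det_nonzero_cong[OF M p nd cong] by simp
qed

lemma sum_grid:
  fixes g :: "nat \<Rightarrow> 'a :: comm_monoid_add"
  shows "(\<Sum>b\<in>{0..<n*k}. g b) = (\<Sum>m<n. \<Sum>l<k. g (m * k + l))"
proof -
  have "(\<Sum>b\<in>{0..<n*k}. g b) = (\<Sum>m<n. sum g {m * k ..< m*k + k})"
    using sum.nat_group[of g k n] by (simp add: atLeast0LessThan)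
  also have "\<dots> = (\<Sum>m<n. \<Sum>l<k. g (m * k + l))"
  proof (rule sum.cong[OF refl])
    fix m
    have "sum g {0 + m * k ..< k + m * k} = (\<Sum>l\<in>{0..<k}. g (l + m * k))"
      by (rule sum.shift_bounds_nat_ivl)
    then show "sum g {m * k..<m * k + k} = (\<Sum>l<k. g (m * k + l))"
      by (simp add: atLeast0LessThan add.commute)
  qed
  finally show ?thesis .
qed

lemma sum_div_delta:
  fixes f :: "nat \<Rightarrow> 'a :: comm_monoid_add"
  assumes "i < n"
  shows "(\<Sum>b\<in>{0..<n*n}. if b div n = i then f (b mod n) else 0) = (\<Sum>l<n. f l)"
proof -
  have "(\<Sum>b\<in>{0..<n*n}. if b div n = i then f (b mod n) else 0) =
      (\<Sum>m<n. \<Sum>l<n. if (m * n + l) div n = i then f ((m * n + l) mod n) else 0)"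
    by (rule sum_grid)
  also have "\<dots> = (\<Sum>m<n. \<Sum>l<n. if m = i then f l else 0)"
    by (intro sum.cong refl) auto
  also have "\<dots> = (\<Sum>l<n. f l)" using assms
    by (simp add: sum.swap[of _ "{..<n}" "{..<n}"] sum.delta)
  finally show ?thesis .
qed

lemma sum_mod_delta:
  fixes f :: "nat \<Rightarrow> 'a :: comm_monoid_add"
  assumes "j < n"
  shows "(\<Sum>b\<in>{0..<n*n}. if b mod n = j then f (b div n) else 0) = (\<Sum>k<n. f k)"
proof -
  have "(\<Sum>b\<in>{0..<n*n}. if b mod n = j then f (b div n) else 0) =
      (\<Sum>m<n. \<Sum>l<n. if (m * n + l) mod n = j then f ((m * n + l) div n) else 0)"
    by (rule sum_grid)
  also have "\<dots> = (\<Sum>m<n. \<Sum>l<n. if l = j then f m else 0)"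
    by (intro sum.cong refl) auto
  also have "\<dots> = (\<Sum>k<n. f k)" using assms
    by (simp add: sum.delta)
  finally show ?thesis .
qed



lemma det_pow_mat: assumes "A \<in> carrier_mat n n" shows "det (A ^\<^sub>m j) = det A ^ j"
proof (induction j)
  case 0 then show ?case using assms by simp
next
  case (Suc j)
  have "A ^\<^sub>m j \<in> carrier_mat n n" using assms by simp
  then show ?case using Suc det_mult[OF _ assms] by (simp add: algebra_simps)
qed

lemma smult_smult_mat: "a \<cdot>\<^sub>m (b \<cdot>\<^sub>m A) = (a * b :: 'a :: semigroup_mult) \<cdot>\<^sub>m A"
  by (rule eq_matI) (auto simp: mult.assoc)

lemma anticomm_pow:
  fixes A F :: "real mat"
  assumes A: "A \<in> carrier_mat n n" and F: "F \<in> carrier_mat n n"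
    and AF: "A * F = (-1) \<cdot>\<^sub>m (F * A)"
  shows "A * F ^\<^sub>m j = ((-1) ^ j) \<cdot>\<^sub>m (F ^\<^sub>m j * A)"
proof (induction j)
  case 0
  have "dim_row F = n" using F by simp
  then show ?case by (intro eq_matI) (use A in auto)
next
  case (Suc j)
  have Fj: "F ^\<^sub>m j \<in> carrier_mat n n" using F by simp
  have "A * F ^\<^sub>m Suc j = A * (F ^\<^sub>m j * F)" by simp
  also have "\<dots> = (A * F ^\<^sub>m j) * F" using assoc_mult_mat[OF A Fj F] by simp
  also have "\<dots> = ((-1) ^ j) \<cdot>\<^sub>m ((F ^\<^sub>m j * A) * F)"
    unfolding Suc by (rule mult_smult_assoc_mat[OF mult_carrier_mat[OF Fj A] F])
  also have "(F ^\<^sub>m j * A) * F = F ^\<^sub>m j * (A * F)" using assoc_mult_mat[OF Fj A F] by simp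
  also have "\<dots> = (-1) \<cdot>\<^sub>m (F ^\<^sub>m j * (F * A))" unfolding AF
    by (rule mult_smult_distrib[OF Fj mult_carrier_mat[OF F A]])
  also have "F ^\<^sub>m j * (F * A) = F ^\<^sub>m Suc j * A" using assoc_mult_mat[OF Fj F A] by simp
  finally show ?case by (simp add: smult_smult_mat)
qed

lemma fusion_eq: assumes "odd p"
  shows "fusion_matrix_X2 p = map_mat real_of_int (Fi p)"
proof (rule eq_matI)
  let ?n = "psu_rank p"
  have pn: "int p = 2 * int ?n + 1" using assms unfolding psu_rank_def by (auto elim!: oddE)
  fix m i assume m: "m < dim_row (map_mat real_of_int (Fi p))" and i: "i < dim_col (map_mat real_of_int (Fi p))"
  then have m: "m < ?n" and i: "i < ?n" by (auto simp: Fi_def)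
  have "int (psu_N p 1 i m) = (if i + 1 = m then 1 else 0) + (if i = m + 1 then 1 else 0)
       + (if i = m \<and> m \<noteq> 0 then 1 else 0)"
    using m i pn unfolding psu_N_def by auto
  then show "fusion_matrix_X2 p $$ (m, i) = map_mat real_of_int (Fi p) $$ (m, i)"
    using m i unfolding fusion_matrix_X2_def Fi_def
    by (simp del: of_nat_add)
qed (auto simp: fusion_matrix_X2_def Fi_def)



lemma sylv_zero:
  fixes A :: "real mat"
  assumes p: "prime p" "odd p" "p \<ge> 5"
    and A: "A \<in> carrier_mat (psu_rank p) (psu_rank p)"
    and AP: "A * map_mat real_of_int (Fi p ^\<^sub>m p) = (-1) \<cdot>\<^sub>m (map_mat real_of_int (Fi p ^\<^sub>m p) * A)"
  shows "A = 0\<^sub>m (psu_rank p) (psu_rank p)"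
proof -
  let ?n = "psu_rank p"
  let ?N = "?n * ?n"
  define P where "P = Fi p ^\<^sub>m p"
  define Pr where "Pr = map_mat real_of_int P"
  have Pc: "P \<in> carrier_mat ?n ?n" unfolding P_def by simp
  have Prc: "Pr \<in> carrier_mat ?n ?n" unfolding Pr_def using Pc by simp
  have n0: "?n > 0" using p unfolding psu_rank_def by simp
  have Pcong: "int p dvd (P $$ (a, b) - (if a = b then 3 else 0))" if "a < ?n" "b < ?n" for a b
    unfolding P_def by (rule Fi_pow_cong) (use p that in auto)
  define M2 where "M2 = mat ?N ?N (\<lambda>(a, b). (if a div ?n = b div ?n then P $$ (b mod ?n, a mod ?n) else 0)
      + (if a mod ?n = b mod ?n then P $$ (a div ?n, b div ?n) else 0))"
  have M2c: "M2 \<in> carrier_mat ?N ?N" unfolding M2_def by simp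
  have dm: "a div ?n < ?n" "a mod ?n < ?n" if "a < ?N" for a
    using that n0 by (auto simp: less_mult_imp_div_less)
  have nd6: "\<not> int p dvd 6"
  proof
    assume "int p dvd 6"
    then have "p dvd 6" by presburger
    then have "p \<le> 6" by (rule dvd_imp_le) simp
    then have "p = 5" using p by presburger
    then show False using \<open>p dvd 6\<close> by simp
  qed
  have cong: "\<forall>a<?N. \<forall>b<?N. int p dvd (M2 $$ (a, b) - (if a = b then 6 else 0))"
  proof (intro allI impI)
    fix a b assume a: "a < ?N" and b: "b < ?N"
    note da = dm[OF a] and db = dm[OF b]
    have eqab: "a = b \<longleftrightarrow> a div ?n = b div ?n \<and> a mod ?n = b mod ?n"
      by (metis div_mult_mod_eq)
    have ent: "M2 $$ (a, b) = (if a div ?n = b div ?n then P $$ (b mod ?n, a mod ?n) else 0)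
      + (if a mod ?n = b mod ?n then P $$ (a div ?n, b div ?n) else 0)"
      unfolding M2_def using a b by simp
    show "int p dvd (M2 $$ (a, b) - (if a = b then 6 else 0))"
    proof (cases "a = b")
      case True
      have "M2 $$ (a, b) - 6 = (P $$ (a mod ?n, a mod ?n) - 3) + (P $$ (a div ?n, a div ?n) - 3)"
        using ent True by simp
      moreover have "int p dvd (P $$ (a mod ?n, a mod ?n) - 3) + (P $$ (a div ?n, a div ?n) - 3)"
        using Pcong[OF da(2) da(2)] Pcong[OF da(1) da(1)] by (intro dvd_add) auto
      ultimately show ?thesis using True by simp
    next
      case False
      show ?thesis
      proof (cases "a div ?n = b div ?n")
        case True
        then have "a mod ?n \<noteq> b mod ?n" using False eqab by blast
        then show ?thesis using ent True False Pcong[OF db(2) da(2)] by simp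
      next
        case F2: False
        show ?thesis
        proof (cases "a mod ?n = b mod ?n")
          case True
          then show ?thesis using ent F2 False Pcong[OF da(1) db(1)] by simp
        next
          case False
          then show ?thesis using ent F2 \<open>a \<noteq> b\<close> by simp
        qed
      qed
    qed
  qed
  define vA where "vA = vec ?N (\<lambda>a. A $$ (a div ?n, a mod ?n))"
  have vAc: "vA \<in> carrier_vec ?N" unfolding vA_def by simp
  have AP': "A * Pr + Pr * A = 0\<^sub>m ?n ?n"
  proof (rule eq_matI)
    fix i j assume "i < dim_row (0\<^sub>m ?n ?n :: real mat)" "j < dim_col (0\<^sub>m ?n ?n :: real mat)"
    then have i: "i < ?n" and j: "j < ?n" by auto
    have "(A * Pr) $$ (i, j) = ((-1) \<cdot>\<^sub>m (Pr * A)) $$ (i, j)" using AP unfolding Pr_def P_def by simp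
    then show "(A * Pr + Pr * A) $$ (i, j) = 0\<^sub>m ?n ?n $$ (i, j)"
      using i j A Prc by simp
  qed (use A Prc in auto)
  have mv: "map_mat real_of_int M2 *\<^sub>v vA = 0\<^sub>v ?N"
  proof (rule eq_vecI)
    fix a assume "a < dim_vec (0\<^sub>v ?N :: real vec)"
    then have a: "a < ?N" by simp
    note da = dm[OF a]
    let ?i = "a div ?n" and ?j = "a mod ?n"
    have "(map_mat real_of_int M2 *\<^sub>v vA) $ a = (\<Sum>b\<in>{0..<?N}. real_of_int (M2 $$ (a, b)) * A $$ (b div ?n, b mod ?n))"
      using a M2c unfolding vA_def by (simp add: scalar_prod_def)
    also have "\<dots> = (\<Sum>b\<in>{0..<?N}. if b div ?n = ?i then A $$ (?i, b mod ?n) * Pr $$ (b mod ?n, ?j) else 0)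
        + (\<Sum>b\<in>{0..<?N}. if b mod ?n = ?j then Pr $$ (?i, b div ?n) * A $$ (b div ?n, ?j) else 0)"
      unfolding sum.distrib[symmetric]
    proof (rule sum.cong[OF refl])
      fix b assume "b \<in> {0..<?N}"
      then have b: "b < ?N" by simp
      note db = dm[OF b]
      show "real_of_int (M2 $$ (a, b)) * A $$ (b div ?n, b mod ?n) =
        (if b div ?n = ?i then A $$ (?i, b mod ?n) * Pr $$ (b mod ?n, ?j) else 0) +
        (if b mod ?n = ?j then Pr $$ (?i, b div ?n) * A $$ (b div ?n, ?j) else 0)"
        unfolding M2_def Pr_def using a b da db Pc by (auto simp: algebra_simps)
    qed
    also have "\<dots> = (\<Sum>l<?n. A $$ (?i, l) * Pr $$ (l, ?j)) + (\<Sum>k<?n. Pr $$ (?i, k) * A $$ (k, ?j))"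
      using sum_div_delta[OF da(1), of "\<lambda>l. A $$ (?i, l) * Pr $$ (l, ?j)"]
        sum_mod_delta[OF da(2), of "\<lambda>k. Pr $$ (?i, k) * A $$ (k, ?j)"] by simp
    also have "\<dots> = (A * Pr + Pr * A) $$ (?i, ?j)"
      using da A Prc by (simp add: scalar_prod_def atLeast0LessThan)
    also have "\<dots> = 0" using AP' da by simp
    finally show "(map_mat real_of_int M2 *\<^sub>v vA) $ a = 0\<^sub>v ?N $ a" using a by simp
  qed (simp add: M2_def)
  have v0: "vA = 0\<^sub>v ?N"
    by (rule real_inj_cong[OF M2c p(1) nd6 cong vAc mv])
  show ?thesis
  proof (rule eq_matI)
    fix i j assume "i < dim_row (0\<^sub>m ?n ?n :: real mat)" "j < dim_col (0\<^sub>m ?n ?n :: real mat)"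
    then have i: "i < ?n" and j: "j < ?n" by auto
    have "i * ?n + j < (i + 1) * ?n" using j by simp
    also have "(i + 1) * ?n \<le> ?n * ?n" using i by (intro mult_le_mono1) simp
    finally have lt: "i * ?n + j < ?N" .
    have "vA $ (i * ?n + j) = A $$ (i, j)" unfolding vA_def using lt j by simp
    then show "A $$ (i, j) = 0\<^sub>m ?n ?n $$ (i, j)" using v0 lt i j by simp
  qed (use A in auto)
qed



theorem mainTheorem19:
  fixes p :: nat
  assumes "prime p" and "odd p"
  shows "\<not> (\<exists>A \<in> carrier_mat (psu_rank p) (psu_rank p).
              A \<noteq> 0\<^sub>m (psu_rank p) (psu_rank p) \<and> T_X2 p A = (-1) \<cdot>\<^sub>m A)"
proof
  assume "\<exists>A \<in> carrier_mat (psu_rank p) (psu_rank p).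
              A \<noteq> 0\<^sub>m (psu_rank p) (psu_rank p) \<and> T_X2 p A = (-1) \<cdot>\<^sub>m A"
  then obtain A where A: "A \<in> carrier_mat (psu_rank p) (psu_rank p)"
    and A0: "A \<noteq> 0\<^sub>m (psu_rank p) (psu_rank p)" and TA: "T_X2 p A = (-1) \<cdot>\<^sub>m A" by blast
  let ?n = "psu_rank p"
  let ?F = "fusion_matrix_X2 p"
  show False
  proof (cases "p = 3")
    case True
    have n1: "?n = 1" using True by (simp add: psu_rank_def)
    have F0: "?F $$ (0, 0) = 0" "dim_row ?F = 1" "dim_col ?F = 1"
      using True by (simp_all add: fusion_matrix_X2_def psu_rank_def psu_N_def)
    let ?X = "sq_mat_inv ?F"
    have dT: "dim_row (T_X2 p A) = 1" "dim_col (T_X2 p A) = 1"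
      using TA A n1 by (metis carrier_matD smult_carrier_mat)+
    then have d0: "0 < dim_row (sq_mat_inv ?F * A)" unfolding T_X2_def by simp
    have "T_X2 p A $$ (0, 0) = row (sq_mat_inv ?F * A) 0 \<bullet> col ?F 0"
      unfolding T_X2_def using d0 F0 by simp
    also have "\<dots> = 0" using F0 by (simp add: scalar_prod_def)
    finally have "A $$ (0, 0) = 0" using TA A n1 by simp
    then have "A = 0\<^sub>m ?n ?n" using A n1 by (intro eq_matI) auto
    then show False using A0 by simp
  next
    case False
    have p5: "p \<ge> 5"
    proof -
      have "p \<ge> 2" using assms(1) prime_ge_2_nat by blast
      then show ?thesis using False assms(2) by presburger
    qed
    have Fr: "?F = map_mat real_of_int (Fi p)" by (rule fusion_eq[OF assms(2)])
    have Fc: "?F \<in> carrier_mat ?n ?n" unfolding Fr by simp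
    have nd3: "\<not> int p dvd 3"
    proof
      assume "int p dvd 3"
      then have "p dvd 3" by presburger
      then have "p \<le> 3" by (rule dvd_imp_le) simp
      then show False using p5 by simp
    qed
    have "det (Fi p ^\<^sub>m p) \<noteq> 0"
      by (rule det_nonzero_cong[of _ ?n, OF _ assms(1) nd3]) (use Fi_pow_cong[OF assms] in auto)
    then have "det (Fi p) \<noteq> 0" using det_pow_mat[OF Fi_carrier] p5 by simp
    then have dF: "det ?F \<noteq> 0" unfolding Fr by simp
    have "?F \<in> Units (ring_mat TYPE(real) ?n ())"
      by (rule det_non_zero_imp_unit[OF Fc dF])
    then obtain B where Bc: "B \<in> carrier_mat ?n ?n" and BF: "B * ?F = 1\<^sub>m ?n" and FB: "?F * B = 1\<^sub>m ?n"
      by (auto simp: Units_def ring_mat_simps)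
    have inv: "sq_mat_inv ?F = B"
      unfolding sq_mat_inv_def
    proof (rule the_equality)
      show "B \<in> carrier_mat (dim_row ?F) (dim_row ?F) \<and> inverts_mat ?F B \<and> inverts_mat B ?F"
        using Bc BF FB Fc by (auto simp: inverts_mat_def)
    next
      fix B' assume "B' \<in> carrier_mat (dim_row ?F) (dim_row ?F) \<and> inverts_mat ?F B' \<and> inverts_mat B' ?F"
      then have B'c: "B' \<in> carrier_mat ?n ?n" and B'F: "B' * ?F = 1\<^sub>m ?n"
        using Fc by (auto simp: inverts_mat_def)
      have "B' = B' * (?F * B)" using FB B'c by simp
      also have "\<dots> = (B' * ?F) * B" using assoc_mult_mat[OF B'c Fc Bc] by simp
      also have "\<dots> = B" using B'F Bc by simp
      finally show "B' = B" .
    qed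
    have "A * ?F = ?F * (B * A * ?F)"
    proof -
      have "?F * (B * A * ?F) = ((?F * B) * A) * ?F"
        using assoc_mult_mat[OF Fc Bc A] assoc_mult_mat[OF Fc mult_carrier_mat[OF Bc A] Fc]
          assoc_mult_mat[OF Bc A Fc] by simp
      also have "\<dots> = A * ?F" using FB A by simp
      finally show ?thesis by simp
    qed
    also have "B * A * ?F = (-1) \<cdot>\<^sub>m A" using TA inv unfolding T_X2_def by simp
    also have "?F * ((-1) \<cdot>\<^sub>m A) = (-1) \<cdot>\<^sub>m (?F * A)" by (rule mult_smult_distrib[OF Fc A])
    finally have AF: "A * ?F = (-1) \<cdot>\<^sub>m (?F * A)" .
    have "A * ?F ^\<^sub>m p = ((-1) ^ p) \<cdot>\<^sub>m (?F ^\<^sub>m p * A)"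
      by (rule anticomm_pow[OF A Fc AF])
    moreover have "?F ^\<^sub>m p = map_mat real_of_int (Fi p ^\<^sub>m p)"
      unfolding Fr by (rule of_int_hom.mat_hom_pow[OF Fi_carrier, symmetric])
    ultimately have "A * map_mat real_of_int (Fi p ^\<^sub>m p) = (-1) \<cdot>\<^sub>m (map_mat real_of_int (Fi p ^\<^sub>m p) * A)"
      using assms(2) by simp
    then have "A = 0\<^sub>m ?n ?n" by (rule sylv_zero[OF assms p5 A])
    then show False using A0 by simp
  qed
qed

end
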